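(* Let $(t_n)_{n\ge1}$ be $\mathbb N$-valued random variables on a probability space, adapted to a filtration $(\mathcal F_n)_{n\ge0}$ (i.e. $t_n$ is $\mathcal F_n$-measurable), and let $p\colon\mathbb N\to[0,1]$ be such that $\mathbb P[t_n=T\mid\mathcal F_{n-1}]\le p(T)$ for all $n,T$, and $R:=\sum_{T=1}^\infty Tp(T)<\infty$. Then $\limsup_{n\to\infty}\frac1n\sum_{k=1}^nt_k\le R$ almost surely. *)

theory Defs
  imports "HOL-Probability.Probability"
begin

end

theory Submission
  imports Defs
begin

definition nj :: "real \<Rightarrow> nat \<Rightarrow> nat" where "nj a j = nat \<lfloor>a ^ j\<rfloor>"

lemma nj_props: assumes "a \<ge> 1"
  shows "1 \<le> nj a j" "real (nj a j) \<le> a ^ j" "a ^ j \<le> 2 * real (nj a j)" "a ^ j < real (nj a j) + 1"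
proof -
  have p: "1 \<le> a ^ j" using assms by (simp add: one_le_power)
  have f1: "1 \<le> \<lfloor>a ^ j\<rfloor>" using p by (simp add: le_floor_iff)
  have e: "real (nj a j) = of_int \<lfloor>a ^ j\<rfloor>" unfolding nj_def using f1 by simp
  show "1 \<le> nj a j" unfolding nj_def using f1 by linarith
  show "real (nj a j) \<le> a ^ j" unfolding e by simp
  show "a ^ j < real (nj a j) + 1" unfolding e by linarith
  show "a ^ j \<le> 2 * real (nj a j)"
  proof (cases "a ^ j < 2")
    case True then show ?thesis using f1 e by linarith
  next
    case False then show ?thesis using e by linarith
  qed
qed

lemma geo: fixes a T :: real assumes a: "a > 1" and T: "T > 0"
  shows "(\<Sum>j<J. if T \<le> a ^ j then 1 / a ^ j else 0)
     \<le> (a/(a-1)) / T - (a/(a-1)) * min (1/T) (1 / a ^ J)"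
proof (induction J)
  case 0
  have "min (1/T) 1 \<le> 1/T" by (rule min.cobounded1)
  moreover have "0 \<le> a / (a-1)" using a by simp
  ultimately show ?case by (simp add: mult_left_mono divide_inverse)
next
  case (Suc J)
  define c where "c = a/(a-1)"
  have c1: "c * (1 - 1/a) = 1" unfolding c_def using a by (simp add: field_simps)
  have cpos: "0 \<le> c" unfolding c_def using a by simp
  have apos: "0 < a ^ J" using a by simp
  show ?case
  proof (cases "T \<le> a ^ J")
    case True
    have m1: "min (1/T) (1/a^J) = 1/a^J" using True T apos a by (auto simp: min_def divide_simps)
    have "a^J < a * a^J" using a apos by simp
    have m2: "min (1/T) (1/a^Suc J) = 1/a^Suc J"
    proof (rule min_absorb2)
      have "T \<le> a^Suc J" using True \<open>a^J < a * a^J\<close> by simp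
      then show "1/a^Suc J \<le> 1/T" using T by (intro frac_le) auto
    qed
    have "(\<Sum>j<Suc J. if T \<le> a ^ j then 1 / a ^ j else 0) \<le> c / T - c * (1/a^J) + 1/a^J"
      using Suc.IH True m1 unfolding c_def by simp
    also have "\<dots> = c / T - c * (1/a^Suc J)"
    proof -
      have "c * (1/a^J) - 1/a^J = c * (1/a^Suc J)"
      proof -
        have ac: "a * c = a + c" using c1 a by (simp add: field_simps)
        show ?thesis using ac apos a by (simp add: field_simps) (metis distrib_right mult.assoc)
      qed
      then show ?thesis by simp
    qed
    finally show ?thesis using m2 unfolding c_def by simp
  next
    case False
    have "min (1/T) (1/a^Suc J) \<le> min (1/T) (1/a^J)"
    proof (rule min.mono)
      have "a^J \<le> a^Suc J" using a apos by simp
      then show "1/a^Suc J \<le> 1/a^J" using apos by (intro frac_le) auto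
    qed simp
    then have "c * min (1/T) (1/a^Suc J) \<le> c * min (1/T) (1/a^J)" using cpos by (rule mult_left_mono)
    then show ?thesis using Suc.IH False unfolding c_def by simp
  qed
qed

lemma geo2: fixes a T :: real assumes a: "a > 1" and T: "T > 0"
  shows "(\<Sum>j<J. if T \<le> a ^ j then 1 / a ^ j else 0) \<le> (a/(a-1)) / T"
proof -
  have "0 \<le> min (1/T) (1 / a ^ J)" using a T by simp
  then have "0 \<le> (a/(a-1)) * min (1/T) (1 / a ^ J)" using a by simp
  then show ?thesis using geo[OF a T, of J] by linarith
qed

lemma sumV: fixes p :: "nat \<Rightarrow> real" and a :: real
  assumes a: "a > 1" and p0: "\<And>T. 0 \<le> p T" and sm: "summable (\<lambda>T. real T * p T)"
  shows "summable (\<lambda>j. (\<Sum>T\<le>nj a j. real T ^ 2 * p T) / real (nj a j))"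
proof (rule summableI_nonneg_bounded)
  define c where "c = a/(a-1)"
  have c0: "0 \<le> c" unfolding c_def using a by simp
  define R where "R = (\<Sum>T. real T * p T)"
  have pR: "\<And>N. (\<Sum>T\<le>N. real T * p T) \<le> R"
    unfolding R_def atMost_atLeast0 using sum_le_suminf[OF sm, of "{0..N}" for N] p0 by auto
  show "\<And>j. 0 \<le> (\<Sum>T\<le>nj a j. real T ^ 2 * p T) / real (nj a j)"
    using p0 by (intro divide_nonneg_nonneg sum_nonneg mult_nonneg_nonneg) auto
  fix J :: nat
  define N where "N = (\<Sum>j<J. nj a j)"
  have jN: "\<And>j. j < J \<Longrightarrow> nj a j \<le> N" unfolding N_def
    by (rule member_le_sum) auto
  have "(\<Sum>j<J. (\<Sum>T\<le>nj a j. real T ^ 2 * p T) / real (nj a j))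
      = (\<Sum>j<J. \<Sum>T\<le>N. if T \<le> nj a j then real T ^ 2 * p T / real (nj a j) else 0)"
  proof (rule sum.cong[OF refl])
    fix j assume "j \<in> {..<J}"
    then have "{T\<in>{..N}. T \<le> nj a j} = {..nj a j}" using jN[of j] by auto
    then have "(\<Sum>T\<le>N. if T \<le> nj a j then real T ^ 2 * p T / real (nj a j) else 0)
        = (\<Sum>T\<le>nj a j. real T ^ 2 * p T / real (nj a j))"
      by (simp add: sum.inter_filter[symmetric])
    then show "(\<Sum>T\<le>nj a j. real T ^ 2 * p T) / real (nj a j) =
        (\<Sum>T\<le>N. if T \<le> nj a j then real T ^ 2 * p T / real (nj a j) else 0)"
      by (simp add: sum_divide_distrib)
  qed
  also have "\<dots> = (\<Sum>T\<le>N. \<Sum>j<J. if T \<le> nj a j then real T ^ 2 * p T / real (nj a j) else 0)"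
    by (rule sum.swap)
  also have "\<dots> \<le> (\<Sum>T\<le>N. 2 * c * (real T * p T))"
  proof (rule sum_mono)
    fix T assume "T \<in> {..N}"
    show "(\<Sum>j<J. if T \<le> nj a j then real T ^ 2 * p T / real (nj a j) else 0) \<le> 2 * c * (real T * p T)"
    proof (cases "T = 0")
      case True then show ?thesis by simp
    next
      case False
      then have T0: "0 < real T" by simp
      have "(\<Sum>j<J. if T \<le> nj a j then real T ^ 2 * p T / real (nj a j) else 0)
          \<le> (\<Sum>j<J. (2 * (real T ^ 2 * p T)) * (if real T \<le> a ^ j then 1 / a ^ j else 0))"
      proof (rule sum_mono)
        fix j
        have n1: "1 \<le> nj a j" and n2: "real (nj a j) \<le> a ^ j" and n3: "a ^ j \<le> 2 * real (nj a j)"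
          using nj_props[of a j] a by auto
        have q: "0 \<le> real T ^ 2 * p T" using p0 by simp
        show "(if T \<le> nj a j then real T ^ 2 * p T / real (nj a j) else 0)
            \<le> (2 * (real T ^ 2 * p T)) * (if real T \<le> a ^ j then 1 / a ^ j else 0)"
        proof (cases "T \<le> nj a j")
          case True
          have Ta: "real T \<le> a ^ j" using n2 True by linarith
          have "1 / real (nj a j) \<le> 2 / a ^ j"
            using n1 n3 a by (simp add: divide_simps)
          then have "real T ^ 2 * p T / real (nj a j) \<le> (real T ^ 2 * p T) * (2 / a ^ j)"
            using mult_left_mono[OF _ q] by (simp add: divide_inverse)
          also have "\<dots> = 2 * (real T ^ 2 * p T) * (1 / a ^ j)" by simp
          finally show ?thesis using True Ta by simp
        qed (use q a in simp)
      qed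
      also have "\<dots> = (2 * (real T ^ 2 * p T)) * (\<Sum>j<J. if real T \<le> a ^ j then 1 / a ^ j else 0)"
        by (simp add: sum_distrib_left)
      also have "\<dots> \<le> (2 * (real T ^ 2 * p T)) * (c / real T)"
        by (rule mult_left_mono) (use geo2[OF a T0, of J] p0 in \<open>auto simp: c_def\<close>)
      also have "\<dots> = 2 * c * (real T * p T)" using T0 by (simp add: power2_eq_square field_simps)
      finally show ?thesis .
    qed
  qed
  also have "\<dots> = 2 * c * (\<Sum>T\<le>N. real T * p T)" by (simp add: sum_distrib_left)
  also have "\<dots> \<le> 2 * c * R" using pR c0 by (intro mult_left_mono) auto
  finally show "(\<Sum>j<J. (\<Sum>T\<le>nj a j. real T ^ 2 * p T) / real (nj a j)) \<le> 2 * c * R" .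
qed


lemma tail_summable_p: fixes p :: "nat \<Rightarrow> real"
  assumes p0: "\<And>T. 0 \<le> p T" and sm: "summable (\<lambda>T. real T * p T)"
  shows "summable (\<lambda>i. p (i + Suc k))"
proof -
  have "summable (\<lambda>i. real (i + Suc k) * p (i + Suc k))"
    using summable_ignore_initial_segment[OF sm, of "Suc k"] by simp
  moreover have "norm (p (i + Suc k)) \<le> real (i + Suc k) * p (i + Suc k)" for i
    using mult_right_mono[of 1 "real (i+Suc k)" "p (i+Suc k)"] p0[of "i + Suc k"] by auto
  ultimately show ?thesis by (rule summable_comparison_test'[of _ 0])
qed

lemma tails: fixes p :: "nat \<Rightarrow> real"
  assumes p0: "\<And>T. 0 \<le> p T" and sm: "summable (\<lambda>T. real T * p T)"
  shows "summable (\<lambda>k. \<Sum>i. p (i + Suc k))"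
proof (rule summableI_nonneg_bounded)
  define tl where "tl k = (\<Sum>i. p (i + Suc k))" for k
  show "\<And>k. 0 \<le> (\<Sum>i. p (i + Suc k))"
    using tail_summable_p[OF p0 sm] p0 by (intro suminf_nonneg) auto
  have step: "tl k = p (Suc k) + tl (Suc k)" for k
  proof -
    have "(\<Sum>n. p (Suc n + Suc k)) = tl k - p (0 + Suc k)"
      unfolding tl_def by (rule suminf_split_head[OF tail_summable_p[OF p0 sm]])
    then show ?thesis unfolding tl_def by simp
  qed
  have ind: "(\<Sum>k<K. tl k) = (\<Sum>T\<le>K. real T * p T) + real K * tl K" for K
  proof (induction K)
    case 0 then show ?case by simp
  next
    case (Suc K)
    have "(\<Sum>k<Suc K. tl k) = (\<Sum>T\<le>K. real T * p T) + real K * tl K + tl K"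
      using Suc by simp
    also have "\<dots> = (\<Sum>T\<le>K. real T * p T) + real (Suc K) * (p (Suc K) + tl (Suc K))"
      using step[of K] by (simp add: algebra_simps)
    also have "\<dots> = (\<Sum>T\<le>Suc K. real T * p T) + real (Suc K) * tl (Suc K)"
      by (simp add: algebra_simps)
    finally show ?case .
  qed
  fix K
  have s2: "summable (\<lambda>i. real (i + Suc K) * p (i + Suc K))"
    using summable_ignore_initial_segment[OF sm, of "Suc K"] by simp
  have "real K * tl K = (\<Sum>i. real K * p (i + Suc K))"
    unfolding tl_def by (rule suminf_mult[OF tail_summable_p[OF p0 sm], symmetric])
  also have "\<dots> \<le> (\<Sum>i. real (i + Suc K) * p (i + Suc K))"
    by (rule suminf_le[OF _ summable_mult[OF tail_summable_p[OF p0 sm]] s2])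
       (use p0 in \<open>auto intro!: mult_right_mono\<close>)
  also have "\<dots> = (\<Sum>T. real T * p T) - (\<Sum>T<Suc K. real T * p T)"
    using suminf_split_initial_segment[OF sm, of "Suc K"] by simp
  finally have "real K * tl K \<le> (\<Sum>T. real T * p T) - (\<Sum>T\<le>K. real T * p T)"
    by (simp add: lessThan_Suc_atMost)
  then show "(\<Sum>k<K. \<Sum>i. p (i + Suc k)) \<le> (\<Sum>T. real T * p T)"
    using ind[of K] unfolding tl_def by simp
qed

lemma exists_j: fixes a :: real assumes a: "a > 1" and n: "1 \<le> x"
  shows "\<exists>j. a ^ j \<le> x \<and> x < a ^ Suc j"
proof -
  obtain i where i: "x < a ^ i" using real_arch_pow[OF a] by blast
  define L where "L = (LEAST i. x < a ^ i)"
  have L: "x < a ^ L" unfolding L_def by (rule LeastI[of _ i]) (rule i)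
  have "L \<noteq> 0" using L n by (cases "L = 0") auto
  then obtain j where j: "L = Suc j" by (cases L) auto
  have "\<not> x < a ^ j" using not_less_Least[of j "\<lambda>i. x < a ^ i"] j unfolding L_def by simp
  then show ?thesis using L j by (intro exI[of _ j]) auto
qed

lemma interp: fixes a B :: real and S :: "nat \<Rightarrow> real"
  assumes a: "a > 1" and B: "0 \<le> B" and mono: "\<And>m n. m \<le> n \<Longrightarrow> S m \<le> S n"
    and ev: "eventually (\<lambda>j. S (nj a j) \<le> real (nj a j) * B) sequentially"
  shows "eventually (\<lambda>n. S n \<le> a * B * real n) sequentially"
proof -
  obtain J where J: "\<And>j. j \<ge> J \<Longrightarrow> S (nj a j) \<le> real (nj a j) * B"
    using ev unfolding eventually_sequentially by blast
  show ?thesis unfolding eventually_sequentially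
  proof (intro exI[of _ "nat \<lceil>a ^ J\<rceil> + 1"] allI impI)
    fix n assume n: "nat \<lceil>a ^ J\<rceil> + 1 \<le> n"
    have aJ: "a ^ J \<le> real n" using n by linarith
    have n1: "1 \<le> real n" using n by simp
    obtain j where j: "a ^ j \<le> real n" "real n < a ^ Suc j" using exists_j[OF a n1] by blast
    have "a ^ J < a ^ Suc j" using aJ j by linarith
    then have "J < Suc j" using power_strict_increasing_iff[OF a, of J "Suc j"] by blast
    then have Jj: "J \<le> Suc j" by simp
    have "int n \<le> \<lfloor>a ^ Suc j\<rfloor>" unfolding le_floor_iff using j(2) by simp
    then have nle: "n \<le> nj a (Suc j)" unfolding nj_def by linarith
    have "S n \<le> S (nj a (Suc j))" by (rule mono[OF nle])
    also have "\<dots> \<le> real (nj a (Suc j)) * B" by (rule J[OF Jj])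
    also have "\<dots> \<le> a ^ Suc j * B" using nj_props(2)[of a "Suc j"] a B by (intro mult_right_mono) auto
    also have "\<dots> = a * a ^ j * B" by simp
    also have "\<dots> \<le> a * real n * B" using j(1) a B by (intro mult_right_mono mult_left_mono) auto
    finally show "S n \<le> a * B * real n" by (simp add: algebra_simps)
  qed
qed


locale P64 = prob_space M for M :: "'a measure" +
  fixes F :: "nat \<Rightarrow> 'a measure" and t :: "nat \<Rightarrow> 'a \<Rightarrow> nat" and p :: "nat \<Rightarrow> real"
  assumes subalg: "\<And>n. subalgebra M (F n)"
    and mono: "\<And>n. sets (F n) \<subseteq> sets (F (Suc n))"
    and adapted: "\<And>n. n \<ge> 1 \<Longrightarrow> t n \<in> measurable (F n) (count_space UNIV)"
    and p_range: "\<And>T. 0 \<le> p T \<and> p T \<le> 1"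
    and cond: "\<And>n T. n \<ge> 1 \<Longrightarrow>
       AE x in M. real_cond_exp M (F (n - 1)) (indicator {y \<in> space M. t n y = T}) x \<le> p T"
    and summ: "summable (\<lambda>T. real T * p T)"
begin

lemma sfs: "sigma_finite_subalgebra M (F n)"
proof -
  interpret finite_measure_subalgebra M "F n"
    by unfold_locales (rule subalg)
  show ?thesis by unfold_locales
qed

lemma space_F[simp]: "space (F n) = space M"
  using subalg[of n] by (simp add: subalgebra_def)

lemma sets_F_mono: "a \<le> b \<Longrightarrow> sets (F a) \<subseteq> sets (F b)"
  by (rule lift_Suc_mono_le[of "\<lambda>n. sets (F n)"]) (use mono in auto)

lemma meas_trans: "a \<le> b \<Longrightarrow> f \<in> measurable (F a) N \<Longrightarrow> f \<in> measurable (F b) N"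
  by (rule measurable_from_subalg[of "F b" "F a"]) (auto simp: subalgebra_def sets_F_mono)

lemma meas_M: "f \<in> measurable (F a) N \<Longrightarrow> f \<in> measurable M N"
  by (rule measurable_from_subalg[OF subalg])

definition "R = (\<Sum>T. real T * p T)"
definition "V n = (\<Sum>T\<le>n. real T ^ 2 * p T)"
definition "A k T = {y \<in> space M. t k y = T}"
definition "s k x = (\<Sum>T\<le>k. real T * indicator (A k T) x)"
definition "c k = real_cond_exp M (F (k-1)) (s k)"
definition "X k x = s k x - c k x"
definition "D n x = (\<Sum>k\<in>{1..n}. X k x)"

lemma A_F: "k \<ge> 1 \<Longrightarrow> A k T \<in> sets (F k)"
proof -
  assume "k \<ge> 1"
  then have "t k -` {T} \<inter> space (F k) \<in> sets (F k)"
    using adapted[of k] by (intro measurable_sets) auto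
  then show ?thesis by (simp add: A_def Int_def vimage_def conj_commute)
qed

lemma A_M: "k \<ge> 1 \<Longrightarrow> A k T \<in> sets M"
  using A_F subalg by (meson subalgebra_def subsetD)

lemma s_meas: "k \<ge> 1 \<Longrightarrow> s k \<in> borel_measurable (F k)"
  unfolding s_def using A_F by measurable

lemma s_measM: "k \<ge> 1 \<Longrightarrow> s k \<in> borel_measurable M"
  using s_meas meas_M by blast

lemma s_eval: "x \<in> space M \<Longrightarrow> s k x = (if t k x \<le> k then real (t k x) else 0)"
  unfolding s_def A_def by (simp add: indicator_def if_distrib sum.delta cong: if_cong)

lemma s_nonneg: "x \<in> space M \<Longrightarrow> 0 \<le> s k x"
  by (simp add: s_eval)

lemma s_le: "x \<in> space M \<Longrightarrow> s k x \<le> real k"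
  by (simp add: s_eval)

lemma s_int: "k \<ge> 1 \<Longrightarrow> integrable M (s k)"
  by (rule integrable_const_bound[where B="real k"]) (auto simp: s_eval s_measM)

lemma ind_int: "k \<ge> 1 \<Longrightarrow> integrable M (indicator (A k T) :: 'a \<Rightarrow> real)"
  using A_M by (simp add: integrable_indicator_iff emeasure_eq_measure)

lemma R_nonneg_terms: "0 \<le> real T * p T"
  using p_range[of T] by simp

lemma partial_le_R: "(\<Sum>T\<le>n. real T * p T) \<le> R"
  unfolding R_def atMost_atLeast0
  using sum_le_suminf[OF summ, of "{0..n}"] R_nonneg_terms by auto

lemma R_nonneg: "0 \<le> R"
  using partial_le_R[of 0] by simp

lemma prob_A: "k \<ge> 1 \<Longrightarrow> prob (A k T) \<le> p T"
proof -
  assume k: "k \<ge> 1"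
  interpret S: sigma_finite_subalgebra M "F (k-1)" by (rule sfs)
  have "prob (A k T) = (\<integral>x. indicator (A k T) x \<partial>M)"
    using A_M[OF k] by simp
  also have "\<dots> = (\<integral>x. real_cond_exp M (F (k-1)) (indicator (A k T)) x \<partial>M)"
    using S.real_cond_exp_int(2)[OF ind_int[OF k]] by simp
  also have "\<dots> \<le> (\<integral>x. p T \<partial>M)"
    apply (rule integral_mono_AE)
    using S.real_cond_exp_int(1)[OF ind_int[OF k]] cond[OF k, of T] by (auto simp: A_def)
  also have "\<dots> = p T" by (simp add: prob_space)
  finally show ?thesis .
qed

lemma c_measF: "c k \<in> borel_measurable (F (k-1))"
  unfolding c_def by (rule borel_measurable_cond_exp)

lemma c_measM: "c k \<in> borel_measurable M"
  using c_measF meas_M by blast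

lemma c_bound: "k \<ge> 1 \<Longrightarrow> AE x in M. 0 \<le> c k x \<and> c k x \<le> R"
proof -
  assume k: "k \<ge> 1"
  interpret S: sigma_finite_subalgebra M "F (k-1)" by (rule sfs)
  let ?ce = "real_cond_exp M (F (k-1))"
  have i1: "\<And>T. integrable M (\<lambda>x. real T * indicator (A k T) x)"
    using ind_int[OF k] by simp
  have e1: "AE x in M. c k x = (\<Sum>T\<le>k. ?ce (\<lambda>x. real T * indicator (A k T) x) x)"
    unfolding c_def s_def by (rule S.real_cond_exp_sum[OF i1])
  have e2: "AE x in M. \<forall>T. ?ce (\<lambda>x. real T * indicator (A k T) x) x = real T * ?ce (indicator (A k T)) x"
    unfolding AE_all_countable using ind_int[OF k] S.real_cond_exp_cmult by blast
  have e3: "AE x in M. \<forall>T. ?ce (indicator (A k T)) x \<le> p T"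
    unfolding AE_all_countable using cond[OF k] by (simp add: A_def)
  have e4: "AE x in M. 0 \<le> c k x"
    unfolding c_def by (rule S.real_cond_exp_pos) (auto simp: s_nonneg s_measM[OF k])
  show ?thesis
  proof (rule AE_mp[OF AE_conjI[OF AE_conjI[OF e1 e2] AE_conjI[OF e3 e4]]], rule AE_I2, safe)
    fix x assume a: "c k x = (\<Sum>T\<le>k. ?ce (\<lambda>x. real T * indicator (A k T) x) x)"
      "\<forall>T. ?ce (\<lambda>x. real T * indicator (A k T) x) x = real T * ?ce (indicator (A k T)) x"
      "\<forall>T. ?ce (indicator (A k T)) x \<le> p T"
    have "c k x = (\<Sum>T\<le>k. real T * ?ce (indicator (A k T)) x)" using a(1,2) by simp
    also have "\<dots> \<le> (\<Sum>T\<le>k. real T * p T)"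
      by (intro sum_mono mult_left_mono) (use a(3) in auto)
    also have "\<dots> \<le> R" by (rule partial_le_R)
    finally show "c k x \<le> R" .
  qed
qed


lemma X_measF: "k \<ge> 1 \<Longrightarrow> X k \<in> borel_measurable (F k)"
proof -
  assume k: "k \<ge> 1"
  have "c k \<in> borel_measurable (F k)" by (rule meas_trans[OF _ c_measF]) simp
  then show ?thesis unfolding X_def using s_meas[OF k] by measurable
qed

lemma X_measM: "k \<ge> 1 \<Longrightarrow> X k \<in> borel_measurable M"
  using X_measF meas_M by blast

lemma X_bound: "k \<ge> 1 \<Longrightarrow> AE x in M. \<bar>X k x\<bar> \<le> real k + R"
proof -
  assume k: "k \<ge> 1"
  show ?thesis
    using c_bound[OF k] by (rule AE_mp) (auto intro!: AE_I2 simp: X_def s_eval)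
qed

lemma G: assumes l: "l \<ge> 1" and fm: "f \<in> borel_measurable (F (l-1))"
  and fb: "AE x in M. \<bar>f x\<bar> \<le> B"
  shows "integrable M (\<lambda>x. f x * X l x)" "(\<integral>x. f x * X l x \<partial>M) = 0"
proof -
  interpret S: sigma_finite_subalgebra M "F (l-1)" by (rule sfs)
  have fM: "f \<in> borel_measurable M" using fm meas_M by blast
  have i1: "integrable M (\<lambda>x. f x * s l x)"
  proof (rule integrable_const_bound[where B="B * real l"])
    show "AE x in M. norm (f x * s l x) \<le> B * real l"
      using fb by (rule AE_mp) (auto intro!: AE_I2 mult_mono simp: abs_mult s_nonneg s_le)
  qed (use fM s_measM[OF l] in measurable)
  have i2: "integrable M (\<lambda>x. f x * c l x)"
    unfolding c_def by (rule S.real_cond_exp_intg(1)[OF i1 fm s_measM[OF l]])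
  have e: "(\<integral>x. f x * c l x \<partial>M) = (\<integral>x. f x * s l x \<partial>M)"
    unfolding c_def by (rule S.real_cond_exp_intg(2)[OF i1 fm s_measM[OF l]])
  have eq: "(\<lambda>x. f x * X l x) = (\<lambda>x. f x * s l x - f x * c l x)"
    by (auto simp: X_def algebra_simps)
  show "integrable M (\<lambda>x. f x * X l x)" unfolding eq using i1 i2 by simp
  show "(\<integral>x. f x * X l x \<partial>M) = 0" unfolding eq using i1 i2 e by simp
qed

lemma orth: assumes "1 \<le> k" "k < l" shows "(\<integral>x. X k x * X l x \<partial>M) = 0"
  and "integrable M (\<lambda>x. X k x * X l x)"
proof -
  have m: "X k \<in> borel_measurable (F (l-1))"
    by (rule meas_trans[OF _ X_measF]) (use assms in auto)
  show "(\<integral>x. X k x * X l x \<partial>M) = 0" "integrable M (\<lambda>x. X k x * X l x)"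
    using G[OF _ m X_bound[of k]] assms by auto
qed

lemma s2_eval: "x \<in> space M \<Longrightarrow> s k x * s k x = (\<Sum>T\<le>k. real T ^ 2 * indicator (A k T) x)"
  unfolding s_eval A_def by (simp add: indicator_def if_distrib sum.delta power2_eq_square cong: if_cong)

lemma s2_int: "k \<ge> 1 \<Longrightarrow> (\<integral>x. s k x * s k x \<partial>M) \<le> V k"
proof -
  assume k: "k \<ge> 1"
  have "(\<integral>x. s k x * s k x \<partial>M) = (\<integral>x. (\<Sum>T\<le>k. real T ^ 2 * indicator (A k T) x) \<partial>M)"
    by (intro Bochner_Integration.integral_cong refl) (auto simp: s2_eval)
  also have "\<dots> = (\<Sum>T\<le>k. (\<integral>x. real T ^ 2 * indicator (A k T) x \<partial>M))"
    by (rule Bochner_Integration.integral_sum) (use ind_int[OF k] in auto)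
  also have "\<dots> = (\<Sum>T\<le>k. real T ^ 2 * prob (A k T))"
    using A_M[OF k] by simp
  also have "\<dots> \<le> V k" unfolding V_def
    by (intro sum_mono mult_left_mono prob_A k) auto
  finally show ?thesis .
qed

lemma X2: assumes l: "l \<ge> 1" shows "(\<integral>x. X l x * X l x \<partial>M) \<le> V l"
  and "integrable M (\<lambda>x. X l x * X l x)"
proof -
  interpret S: sigma_finite_subalgebra M "F (l-1)" by (rule sfs)
  have cb: "AE x in M. \<bar>c l x\<bar> \<le> R" using c_bound[OF l] by (rule AE_mp) (auto intro!: AE_I2)
  note Gc = G[OF l c_measF cb]
  have sb: "AE x in M. \<bar>s l x\<bar> \<le> real l" by (auto intro!: AE_I2 simp: s_nonneg s_le)
  have iss: "integrable M (\<lambda>x. s l x * s l x)"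
  proof (rule integrable_const_bound[where B="real l * real l"])
    show "AE x in M. norm (s l x * s l x) \<le> real l * real l"
      by (auto intro!: AE_I2 mult_mono simp: abs_mult s_nonneg s_le)
  qed (use s_measM[OF l] in measurable)
  have isc: "integrable M (\<lambda>x. c l x * s l x)"
  proof (rule integrable_const_bound[where B="R * real l"])
    show "AE x in M. norm (c l x * s l x) \<le> R * real l"
      using c_bound[OF l] by (rule AE_mp) (auto intro!: AE_I2 mult_mono simp: abs_mult s_nonneg s_le)
  qed (use s_measM[OF l] c_measM in measurable)
  have icc: "(\<integral>x. c l x * c l x \<partial>M) = (\<integral>x. c l x * s l x \<partial>M)"
    unfolding c_def[of l] by (rule S.real_cond_exp_intg(2)[OF isc[unfolded c_def] borel_measurable_cond_exp s_measM[OF l]])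
  have icc1: "integrable M (\<lambda>x. c l x * c l x)"
    unfolding c_def[of l] by (rule S.real_cond_exp_intg(1)[OF isc[unfolded c_def] borel_measurable_cond_exp s_measM[OF l]])
  have pos: "0 \<le> (\<integral>x. c l x * c l x \<partial>M)" by simp
  have eq: "(\<lambda>x. X l x * X l x) = (\<lambda>x. (s l x * s l x - c l x * s l x) - c l x * X l x)"
    by (auto simp: X_def algebra_simps)
  show "integrable M (\<lambda>x. X l x * X l x)" unfolding eq using iss isc Gc by simp
  have "(\<integral>x. X l x * X l x \<partial>M) = (\<integral>x. s l x * s l x \<partial>M) - (\<integral>x. c l x * s l x \<partial>M)"
    unfolding eq using iss isc Gc by simp
  also have "\<dots> \<le> (\<integral>x. s l x * s l x \<partial>M)" using icc pos by simp
  also have "\<dots> \<le> V l" by (rule s2_int[OF l])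
  finally show "(\<integral>x. X l x * X l x \<partial>M) \<le> V l" .
qed


lemma XX: assumes "1 \<le> k" "1 \<le> l"
  shows "integrable M (\<lambda>x. X k x * X l x)"
    "(\<integral>x. X k x * X l x \<partial>M) = (if k = l then (\<integral>x. X k x * X k x \<partial>M) else 0)"
proof -
  consider "k < l" | "k = l" | "l < k" by linarith
  then have "integrable M (\<lambda>x. X k x * X l x) \<and>
    (\<integral>x. X k x * X l x \<partial>M) = (if k = l then (\<integral>x. X k x * X k x \<partial>M) else 0)"
  proof cases
    case 1 then show ?thesis using orth[of k l] assms by auto
  next
    case 2 then show ?thesis using X2[of k] assms by auto
  next
    case 3 then show ?thesis using orth[of l k] assms by (auto simp: mult.commute)
  qed
  then show "integrable M (\<lambda>x. X k x * X l x)"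
    "(\<integral>x. X k x * X l x \<partial>M) = (if k = l then (\<integral>x. X k x * X k x \<partial>M) else 0)" by auto
qed

lemma V_mono: "k \<le> n \<Longrightarrow> V k \<le> V n"
  unfolding V_def by (rule sum_mono2) (use p_range in auto)

lemma V_nonneg: "0 \<le> V n"
  unfolding V_def by (rule sum_nonneg) (use p_range in auto)

lemma DD_eq: "D n x * D n x = (\<Sum>k\<in>{1..n}. \<Sum>l\<in>{1..n}. X k x * X l x)"
  unfolding D_def by (rule sum_product)

lemma DD_int: "integrable M (\<lambda>x. D n x * D n x)"
  unfolding DD_eq by (rule Bochner_Integration.integrable_sum, rule Bochner_Integration.integrable_sum, rule XX) auto

lemma D_meas: "D n \<in> borel_measurable M"
proof -
  have "\<And>k. k \<in> {1..n} \<Longrightarrow> X k \<in> borel_measurable M" using X_measM by auto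
  then show ?thesis unfolding D_def by (intro borel_measurable_sum) auto
qed

lemma DD_bound: "(\<integral>x. D n x * D n x \<partial>M) \<le> real n * V n"
proof -
  have "(\<integral>x. D n x * D n x \<partial>M) = (\<Sum>k\<in>{1..n}. \<Sum>l\<in>{1..n}. (\<integral>x. X k x * X l x \<partial>M))"
    unfolding DD_eq
    by (subst Bochner_Integration.integral_sum, force intro: integrable_sum XX,
        intro sum.cong refl Bochner_Integration.integral_sum XX) auto
  also have "\<dots> = (\<Sum>k\<in>{1..n}. \<Sum>l\<in>{1..n}. (if k = l then (\<integral>x. X k x * X k x \<partial>M) else 0))"
    by (intro sum.cong refl XX) auto
  also have "\<dots> = (\<Sum>k\<in>{1..n}. (\<integral>x. X k x * X k x \<partial>M))"
    by (simp add: sum.delta)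
  also have "\<dots> \<le> (\<Sum>k\<in>{1..n}. V n)"
    by (intro sum_mono order.trans[OF X2(1) V_mono]) auto
  also have "\<dots> = real n * V n" by simp
  finally show ?thesis .
qed

lemma cheb: assumes n: "n \<ge> 1" and e: "e > 0"
  shows "prob {x\<in>space M. e * real n \<le> D n x} \<le> V n / (e^2 * real n)"
proof -
  have "{x\<in>space M. e * real n \<le> D n x} \<subseteq> {x\<in>space M. (e * real n)^2 \<le> D n x * D n x}"
  proof safe
    fix x assume "x \<in> space M" "e * real n \<le> D n x"
    moreover have "0 \<le> e * real n" using e by simp
    ultimately show "(e * real n)^2 \<le> D n x * D n x"
      by (metis mult_mono power2_eq_square order.trans)
  qed
  then have "prob {x\<in>space M. e * real n \<le> D n x} \<le> prob {x\<in>space M. (e * real n)^2 \<le> D n x * D n x}"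
    using D_meas by (intro finite_measure_mono) measurable
  also have "\<dots> \<le> (\<integral>x. D n x * D n x \<partial>M) / (e * real n)^2"
    by (rule integral_Markov_inequality_measure[OF DD_int, of "space M"]) (use e n in auto)
  also have "\<dots> \<le> real n * V n / (e * real n)^2"
    by (intro divide_right_mono DD_bound) auto
  also have "\<dots> = V n / (e^2 * real n)"
    using n by (simp add: power2_eq_square)
  finally show ?thesis .
qed


lemma trunc: "AE x in M. eventually (\<lambda>k. t k x \<le> k) sequentially"
proof -
  define B where "B k = (if k = 0 then {} else (\<Union>i. A k (i + Suc k)))" for k
  have Bm: "B k \<in> sets M" for k
    unfolding B_def using A_M by auto
  have pB: "prob (B k) \<le> (\<Sum>i. p (i + Suc k))" if k: "k \<ge> 1" for k
  proof -
    have sA: "summable (\<lambda>i. prob (A k (i + Suc k)))"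
      by (rule summable_comparison_test'[OF tail_summable_p[OF _ summ, of k], of 0])
         (use p_range prob_A[OF k] in auto)
    have "prob (B k) = prob (\<Union>i. A k (i + Suc k))" unfolding B_def using k by simp
    also have "\<dots> \<le> (\<Sum>i. prob (A k (i + Suc k)))"
      by (rule finite_measure_subadditive_countably[OF _ sA]) (use A_M[OF k] in auto)
    also have "\<dots> \<le> (\<Sum>i. p (i + Suc k))"
      by (rule suminf_le[OF _ sA tail_summable_p[OF _ summ]]) (use p_range prob_A[OF k] in auto)
    finally show ?thesis .
  qed
  have sB: "summable (\<lambda>k. prob (B k))"
    by (rule summable_comparison_test'[OF tails[OF _ summ], of 1]) (use p_range pB in auto)
  have "AE x in M. eventually (\<lambda>n. x \<in> space M - B n) sequentially"
    by (rule borel_cantelli_AE1[OF Bm _ sB]) (simp add: emeasure_eq_measure)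
  then show ?thesis
  proof (rule AE_mp, intro AE_I2 impI)
    fix x assume x: "x \<in> space M" and ev: "eventually (\<lambda>n. x \<in> space M - B n) sequentially"
    have "eventually (\<lambda>n. n \<ge> 1) sequentially" by (rule eventually_ge_at_top)
    with ev show "eventually (\<lambda>k. t k x \<le> k) sequentially"
    proof (rule eventually_elim2)
      fix k assume "x \<in> space M - B k" "k \<ge> 1"
      then have "\<not> (\<exists>i. t k x = i + Suc k)" using x by (auto simp: B_def A_def)
      then show "t k x \<le> k" by (metis add.commute le_add_diff_inverse not_less_eq_eq)
    qed
  qed
qed

lemma BC2: assumes a: "a > 1" and e: "e > 0"
  shows "AE x in M. eventually (\<lambda>j. D (nj a j) x < e * real (nj a j)) sequentially"
proof -
  define E where "E j = {x\<in>space M. e * real (nj a j) \<le> D (nj a j) x}" for j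
  have Em: "E j \<in> sets M" for j unfolding E_def using D_meas by measurable
  have pE: "prob (E j) \<le> V (nj a j) / real (nj a j) / e^2" for j
    unfolding E_def using cheb[OF nj_props(1)[of a j] e] a by (simp add: field_simps)
  have sV: "summable (\<lambda>j. V (nj a j) / real (nj a j))"
    unfolding V_def by (rule sumV[OF a _ summ]) (use p_range in auto)
  have sE: "summable (\<lambda>j. prob (E j))"
    by (rule summable_comparison_test'[OF summable_divide[OF sV, of "e^2"], of 0]) (use pE in auto)
  have "AE x in M. eventually (\<lambda>n. x \<in> space M - E n) sequentially"
    by (rule borel_cantelli_AE1[OF Em _ sE]) (simp add: emeasure_eq_measure)
  then show ?thesis
    by (rule AE_mp) (auto intro!: AE_I2 elim!: eventually_mono simp: E_def)
qed


lemma per_ae: assumes a: "a > 1" and e: "e > 0"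
  shows "AE x in M. eventually (\<lambda>n. (\<Sum>k=1..n. real (t k x)) / real n \<le> a * (R + e) + e) sequentially"
proof -
  have cR: "AE x in M. \<forall>k. 1 \<le> k \<longrightarrow> c k x \<le> R"
    unfolding AE_all_countable using c_bound by (auto elim!: AE_mp intro!: AE_I2)
  show ?thesis
  proof (rule AE_mp[OF AE_conjI[OF AE_conjI[OF trunc BC2[OF a e]] cR]], intro AE_I2 impI)
    fix x assume x: "x \<in> space M" and h: "(eventually (\<lambda>k. t k x \<le> k) sequentially \<and>
      eventually (\<lambda>j. D (nj a j) x < e * real (nj a j)) sequentially) \<and> (\<forall>k. 1 \<le> k \<longrightarrow> c k x \<le> R)"
    define S where "S n = (\<Sum>k=1..n. s k x)" for n
    have Smono: "S m \<le> S n" if "m \<le> n" for m n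
      unfolding S_def by (rule sum_mono2) (use that s_nonneg x in auto)
    have DS: "D n x = S n - (\<Sum>k=1..n. c k x)" for n
      unfolding D_def S_def X_def by (simp add: sum_subtractf)
    have cs: "(\<Sum>k=1..n. c k x) \<le> real n * R" for n
    proof -
      have "(\<Sum>k=1..n. c k x) \<le> (\<Sum>k=1..n. R)" by (rule sum_mono) (use h in auto)
      then show ?thesis by simp
    qed
    have evS: "eventually (\<lambda>j. S (nj a j) \<le> real (nj a j) * (R + e)) sequentially"
      using conjunct2[OF conjunct1[OF h]]
    proof (rule eventually_mono)
      fix j assume "D (nj a j) x < e * real (nj a j)"
      then show "S (nj a j) \<le> real (nj a j) * (R + e)"
        using DS[of "nj a j"] cs[of "nj a j"] by (simp add: algebra_simps)
    qed
    have evI: "eventually (\<lambda>n. S n \<le> a * (R + e) * real n) sequentially"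
      by (rule interp[OF a _ Smono evS]) (use R_nonneg e in auto)
    obtain N0 where N0: "\<And>k. k \<ge> N0 \<Longrightarrow> t k x \<le> k"
      using conjunct1[OF conjunct1[OF h]] unfolding eventually_sequentially by blast
    define C where "C = (\<Sum>k=1..N0. real (t k x))"
    have C0: "0 \<le> C" unfolding C_def by (rule sum_nonneg) auto
    have tS: "(\<Sum>k=1..n. real (t k x)) \<le> C + S n" for n
    proof -
      have "(\<Sum>k=1..n. real (t k x)) \<le> (\<Sum>k=1..n. s k x + (if k \<le> N0 then real (t k x) else 0))"
      proof (rule sum_mono)
        fix k assume "k \<in> {1..n}"
        show "real (t k x) \<le> s k x + (if k \<le> N0 then real (t k x) else 0)"
          using s_nonneg[OF x, of k] N0[of k] by (auto simp: s_eval[OF x])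
      qed
      also have "\<dots> = S n + (\<Sum>k=1..n. if k \<le> N0 then real (t k x) else 0)"
        unfolding S_def by (simp add: sum.distrib)
      also have "\<dots> = S n + (\<Sum>k\<in>{k\<in>{1..n}. k \<le> N0}. real (t k x))"
        by (subst sum.inter_filter) auto
      also have "\<dots> \<le> S n + C"
        unfolding C_def by (intro add_left_mono sum_mono2) auto
      finally show ?thesis by simp
    qed
    have evC: "eventually (\<lambda>n. C \<le> e * real n \<and> n \<ge> 1) sequentially"
      unfolding eventually_sequentially
    proof (intro exI[of _ "nat \<lceil>C / e\<rceil> + 1"] allI impI conjI)
      fix n assume n: "nat \<lceil>C / e\<rceil> + 1 \<le> n"
      then have "C / e \<le> real n" by linarith
      then show "C \<le> e * real n" using e by (simp add: divide_simps mult.commute)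
      show "n \<ge> 1" using n by simp
    qed
    have fin: "eventually (\<lambda>n. (\<Sum>k=1..n. real (t k x)) / real n \<le> a * (R + e) + e) sequentially"
      using evI evC
    proof (rule eventually_elim2)
      fix n assume h1: "S n \<le> a * (R + e) * real n" and h2: "C \<le> e * real n \<and> n \<ge> 1"
      then have np: "0 < real n" by simp
      have "(\<Sum>k=1..n. real (t k x)) \<le> (a * (R + e) + e) * real n"
        using tS[of n] h1 h2 by (simp add: algebra_simps)
      then show "(\<Sum>k=1..n. real (t k x)) / real n \<le> a * (R + e) + e"
        using np by (simp add: divide_simps)
    qed
    show "eventually (\<lambda>n. (\<Sum>k=1..n. real (t k x)) / real n \<le> a * (R + e) + e) sequentially"
      by (rule fin)
  qed
qed

lemma main: "AE x in M. limsup (\<lambda>n. ereal ((\<Sum>k=1..n. real (t k x)) / real n)) \<le> ereal R"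
proof -
  define d where "d m = inverse (real (Suc m))" for m
  have d0: "0 < d m" "d m \<le> 1" for m unfolding d_def by (auto simp: field_simps)
  have "AE x in M. \<forall>m. eventually (\<lambda>n. (\<Sum>k=1..n. real (t k x)) / real n \<le> (1 + d m) * (R + d m) + d m) sequentially"
    unfolding AE_all_countable using per_ae d0 by auto
  then show ?thesis
  proof (rule AE_mp, intro AE_I2 impI)
    fix x assume h: "\<forall>m. eventually (\<lambda>n. (\<Sum>k=1..n. real (t k x)) / real n \<le> (1 + d m) * (R + d m) + d m) sequentially"
    show "limsup (\<lambda>n. ereal ((\<Sum>k=1..n. real (t k x)) / real n)) \<le> ereal R"
    proof (rule ereal_le_epsilon2)
      fix eps :: real assume eps: "0 < eps"
      have R3: "0 < R + 3" using R_nonneg by simp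
      obtain m where m: "inverse (real (Suc m)) < eps / (R + 3)"
        using reals_Archimedean[of "eps / (R+3)"] eps R3 by auto
      have "d m * (R + 3) < eps" using m R3 unfolding d_def by (simp add: field_simps)
      moreover have "(1 + d m) * (R + d m) + d m \<le> R + d m * (R + 3)"
        using d0[of m] by (simp add: algebra_simps)
      ultimately have b: "(1 + d m) * (R + d m) + d m \<le> R + eps" by linarith
      have "limsup (\<lambda>n. ereal ((\<Sum>k=1..n. real (t k x)) / real n)) \<le> ereal ((1 + d m) * (R + d m) + d m)"
        by (rule Limsup_bounded) (use h[rule_format, of m] in \<open>auto elim!: eventually_mono\<close>)
      also have "\<dots> \<le> ereal R + ereal eps" using b by simp
      finally show "limsup (\<lambda>n. ereal ((\<Sum>k=1..n. real (t k x)) / real n)) \<le> ereal R + ereal eps" .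
    qed
  qed
qed


end

theorem proposition6p4:
  fixes M :: "'a measure" and F :: "nat \<Rightarrow> 'a measure"
    and t :: "nat \<Rightarrow> 'a \<Rightarrow> nat" and p :: "nat \<Rightarrow> real"
  assumes "prob_space M"
    and subalg: "\<And>n. subalgebra M (F n)"
    and mono: "\<And>n. sets (F n) \<subseteq> sets (F (Suc n))"
    and adapted: "\<And>n. n \<ge> 1 \<Longrightarrow> t n \<in> measurable (F n) (count_space UNIV)"
    and p_range: "\<And>T. 0 \<le> p T \<and> p T \<le> 1"
    and cond: "\<And>n T. n \<ge> 1 \<Longrightarrow>
       AE x in M. real_cond_exp M (F (n - 1)) (indicator {y \<in> space M. t n y = T}) x \<le> p T"
    and summ: "summable (\<lambda>T. real T * p T)"
  shows "AE x in M. limsup (\<lambda>n. ereal ((\<Sum>k=1..n. real (t k x)) / real n))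
                      \<le> ereal (\<Sum>T. real T * p T)"
proof -
  interpret P64 M F t p
    by (rule P64.intro[OF assms(1)], unfold_locales) (use assms in auto)
  show ?thesis using main unfolding R_def .
qed

end
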